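(* Let $X$ be a $T_0$ $k$-bounded sober space and $x\in X$. If $E$ is an irreducible subset of $X$ whose supremum exists, with $\bigvee E\ge x$ and $E\subseteq\twoheaddownarrow_{\operatorname{Irr}} x$, then $\twoheaddownarrow_{\operatorname{Irr}} x$ is irreducible in $X$.
   Context: For a topological space $X$, a nonempty subset $E$ is irreducible if whenever $E\subseteq A_1\cup A_2$ with $A_1,A_2$ closed, $E\subseteq A_1$ or $E\subseteq A_2$. The specialisation order is $x\le y$ iff $x\in\operatorname{cl}(\{y\})$; $\uparrow x=\{z:z\ge x\}$; $\bigvee$ denotes supremum in this order. $\operatorname{Irr}^+(X)$ is the set of irreducible subsets whose supremum exists. $X$ is $k$-bounded sober if every closed set $F\in\operatorname{Irr}^+(X)$ is the closure of a unique singleton. $x\ll_{\operatorname{Irr}} y$ iff for every $E\in\operatorname{Irr}^+(X)$ with $\bigvee E\ge y$, $E\cap\uparrow x\ne\emptyset$; $\twoheaddownarrow_{\operatorname{Irr}} x=\{y:y\ll_{\operatorname{Irr}} x\}$. *)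

theory Defs
  imports "HOL-Analysis.Analysis"
begin

definition spec_le :: "'a topology \<Rightarrow> 'a \<Rightarrow> 'a \<Rightarrow> bool" where
  "spec_le X x y \<longleftrightarrow> x \<in> topspace X \<and> y \<in> topspace X \<and> x \<in> X closure_of {y}"

definition up_set :: "'a topology \<Rightarrow> 'a \<Rightarrow> 'a set" where
  "up_set X x = {z \<in> topspace X. spec_le X x z}"

definition irreducible_in :: "'a topology \<Rightarrow> 'a set \<Rightarrow> bool" where
  "irreducible_in X E \<longleftrightarrow> E \<noteq> {} \<and> E \<subseteq> topspace X \<and>
     (\<forall>A1 A2. closedin X A1 \<and> closedin X A2 \<and> E \<subseteq> A1 \<union> A2 \<longrightarrow> E \<subseteq> A1 \<or> E \<subseteq> A2)"

definition is_spec_sup :: "'a topology \<Rightarrow> 'a set \<Rightarrow> 'a \<Rightarrow> bool" where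
  "is_spec_sup X E s \<longleftrightarrow> s \<in> topspace X \<and> (\<forall>e\<in>E. spec_le X e s) \<and>
     (\<forall>u\<in>topspace X. (\<forall>e\<in>E. spec_le X e u) \<longrightarrow> spec_le X s u)"

definition spec_sup :: "'a topology \<Rightarrow> 'a set \<Rightarrow> 'a" where
  "spec_sup X E = (THE s. is_spec_sup X E s)"

definition Irr_plus :: "'a topology \<Rightarrow> 'a set set" where
  "Irr_plus X = {E. irreducible_in X E \<and> (\<exists>s. is_spec_sup X E s)}"

definition k_bounded_sober :: "'a topology \<Rightarrow> bool" where
  "k_bounded_sober X \<longleftrightarrow>
     (\<forall>F\<in>Irr_plus X. closedin X F \<longrightarrow> (\<exists>!x. x \<in> topspace X \<and> F = X closure_of {x}))"

definition way_below_Irr :: "'a topology \<Rightarrow> 'a \<Rightarrow> 'a \<Rightarrow> bool" where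
  "way_below_Irr X x y \<longleftrightarrow> x \<in> topspace X \<and> y \<in> topspace X \<and>
     (\<forall>E\<in>Irr_plus X. spec_le X y (spec_sup X E) \<longrightarrow> E \<inter> up_set X x \<noteq> {})"

definition ddown_Irr :: "'a topology \<Rightarrow> 'a \<Rightarrow> 'a set" where
  "ddown_Irr X x = {y \<in> topspace X. way_below_Irr X y x}"

end

theory Submission
  imports Defs
begin

theorem lemma4p5:
  fixes X :: "'a topology" and x :: 'a and E :: "'a set"
  assumes "t0_space X" and "k_bounded_sober X" and "x \<in> topspace X"
    and "E \<in> Irr_plus X"
    and "spec_le X x (spec_sup X E)"
    and "E \<subseteq> ddown_Irr X x"
  shows "irreducible_in X (ddown_Irr X x)"
proof -
  have irrE: "irreducible_in X E" using assms(4) by (simp add: Irr_plus_def)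
  have key: "\<And>A. closedin X A \<Longrightarrow> E \<subseteq> A \<Longrightarrow> ddown_Irr X x \<subseteq> A"
  proof
    fix A y assume A: "closedin X A" "E \<subseteq> A" and y: "y \<in> ddown_Irr X x"
    have "way_below_Irr X y x" using y by (simp add: ddown_Irr_def)
    then have "E \<inter> up_set X y \<noteq> {}" using assms(4,5) by (simp add: way_below_Irr_def)
    then obtain e where e: "e \<in> E" "spec_le X y e" by (auto simp: up_set_def)
    have "X closure_of {e} \<subseteq> A" using A e(1) by (intro closure_of_minimal) auto
    then show "y \<in> A" using e(2) by (auto simp: spec_le_def)
  qed
  show ?thesis unfolding irreducible_in_def
  proof (intro conjI allI impI)
    show "ddown_Irr X x \<noteq> {}" using irrE assms(6) by (auto simp: irreducible_in_def)
    show "ddown_Irr X x \<subseteq> topspace X" by (auto simp: ddown_Irr_def)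
    fix A1 A2 assume h: "closedin X A1 \<and> closedin X A2 \<and> ddown_Irr X x \<subseteq> A1 \<union> A2"
    then have "E \<subseteq> A1 \<or> E \<subseteq> A2" using irrE assms(6) unfolding irreducible_in_def by blast
    then show "ddown_Irr X x \<subseteq> A1 \<or> ddown_Irr X x \<subseteq> A2" using key h by blast
  qed
qed

end
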